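(* Let $G$ be a vertex-transitive graph on $n \ge 3$ vertices whose automorphism group is abelian. Then $\frac{\lambda_3(G)}{n} \le \frac13$.
   Context: $\lambda_3(G)$ denotes the third largest eigenvalue (with multiplicity) of the adjacency matrix of $G$. *)

theory Defs
  imports "Jordan_Normal_Form.Char_Poly" "HOL-Combinatorics.Permutations"
begin

text \<open>A finite simple graph on the vertex set {0..<n}, given by an edge relation E
  (only its values on {0..<n} matter).\<close>
definition simple_graph :: "nat \<Rightarrow> (nat \<Rightarrow> nat \<Rightarrow> bool) \<Rightarrow> bool" where
  "simple_graph n E \<longleftrightarrow> (\<forall>x<n. \<forall>y<n. E x y \<longleftrightarrow> E y x) \<and> (\<forall>x<n. \<not> E x x)"

definition graph_automorphisms :: "nat \<Rightarrow> (nat \<Rightarrow> nat \<Rightarrow> bool) \<Rightarrow> (nat \<Rightarrow> nat) set" where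
  "graph_automorphisms n E =
     {\<sigma>. \<sigma> permutes {..<n} \<and> (\<forall>x<n. \<forall>y<n. E (\<sigma> x) (\<sigma> y) \<longleftrightarrow> E x y)}"

definition vertex_transitive :: "nat \<Rightarrow> (nat \<Rightarrow> nat \<Rightarrow> bool) \<Rightarrow> bool" where
  "vertex_transitive n E \<longleftrightarrow> (\<forall>x<n. \<forall>y<n. \<exists>\<sigma>\<in>graph_automorphisms n E. \<sigma> x = y)"

definition abelian_automorphism_group :: "nat \<Rightarrow> (nat \<Rightarrow> nat \<Rightarrow> bool) \<Rightarrow> bool" where
  "abelian_automorphism_group n E \<longleftrightarrow>
     (\<forall>\<sigma>\<in>graph_automorphisms n E. \<forall>\<tau>\<in>graph_automorphisms n E. \<sigma> \<circ> \<tau> = \<tau> \<circ> \<sigma>)"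

definition adjacency_matrix :: "nat \<Rightarrow> (nat \<Rightarrow> nat \<Rightarrow> bool) \<Rightarrow> real mat" where
  "adjacency_matrix n E = mat n n (\<lambda>(i, j). if E i j then 1 else 0)"

text \<open>Eigenvalues with (algebraic) multiplicity, sorted non-increasingly. The adjacency
  matrix is real symmetric, so its characteristic polynomial splits over the reals.\<close>
definition adj_eigenvalues_desc :: "nat \<Rightarrow> (nat \<Rightarrow> nat \<Rightarrow> bool) \<Rightarrow> real list" where
  "adj_eigenvalues_desc n E =
     rev (sorted_list_of_multiset (proots (char_poly (adjacency_matrix n E))))"

definition adj_lambda :: "nat \<Rightarrow> nat \<Rightarrow> (nat \<Rightarrow> nat \<Rightarrow> bool) \<Rightarrow> real" where
  "adj_lambda k n E = adj_eigenvalues_desc n E ! (k - 1)"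

end

theory Submission
  imports Defs
begin


locale vtab =
  fixes n :: nat and E :: "nat \<Rightarrow> nat \<Rightarrow> bool"
  assumes sg: "simple_graph n E"
    and n3: "n \<ge> 3"
    and vt: "vertex_transitive n E"
    and ab: "abelian_automorphism_group n E"
begin

abbreviation "Aut \<equiv> graph_automorphisms n E"

lemma autD: "\<sigma> \<in> Aut \<Longrightarrow> \<sigma> permutes {..<n}"
  "\<sigma> \<in> Aut \<Longrightarrow> x < n \<Longrightarrow> y < n \<Longrightarrow> E (\<sigma> x) (\<sigma> y) \<longleftrightarrow> E x y"
  by (auto simp: graph_automorphisms_def)

lemma aut_lt: "\<sigma> \<in> Aut \<Longrightarrow> x < n \<Longrightarrow> \<sigma> x < n"
  using permutes_in_image[OF autD(1)] by auto

lemma aut_out: "\<sigma> \<in> Aut \<Longrightarrow> \<not> x < n \<Longrightarrow> \<sigma> x = x"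
  using permutes_not_in[OF autD(1)] by auto

lemma aut_comp: "\<sigma> \<in> Aut \<Longrightarrow> \<tau> \<in> Aut \<Longrightarrow> \<sigma> \<circ> \<tau> \<in> Aut"
  unfolding graph_automorphisms_def
  by (auto intro: permutes_compose simp: aut_lt graph_automorphisms_def)

lemma aut_id: "id \<in> Aut"
  unfolding graph_automorphisms_def by (auto intro: permutes_id)

lemma aut_inv: assumes "\<sigma> \<in> Aut" shows "Hilbert_Choice.inv \<sigma> \<in> Aut"
proof -
  have p: "\<sigma> permutes {..<n}" using autD(1)[OF assms] .
  have pi: "Hilbert_Choice.inv \<sigma> permutes {..<n}" using permutes_inv[OF p] .
  have lt: "x < n \<Longrightarrow> Hilbert_Choice.inv \<sigma> x < n" for x using permutes_in_image[OF pi] by auto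
  show ?thesis unfolding graph_automorphisms_def
  proof (intro CollectI conjI pi allI impI)
    fix x y assume "x < n" "y < n"
    then show "E (Hilbert_Choice.inv \<sigma> x) (Hilbert_Choice.inv \<sigma> y) = E x y"
      using autD(2)[OF assms lt lt] permutes_inverses(1)[OF p] by metis
  qed
qed

lemma comm: "\<sigma> \<in> Aut \<Longrightarrow> \<tau> \<in> Aut \<Longrightarrow> \<sigma> \<circ> \<tau> = \<tau> \<circ> \<sigma>"
  using ab unfolding abelian_automorphism_group_def by blast

lemma n0: "0 < n" using n3 by auto

lemma regular: assumes "\<sigma> \<in> Aut" "\<tau> \<in> Aut" "\<sigma> 0 = \<tau> 0" shows "\<sigma> = \<tau>"
proof
  fix x
  show "\<sigma> x = \<tau> x"
  proof (cases "x < n")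
    case True
    obtain \<rho> where r: "\<rho> \<in> Aut" "\<rho> 0 = x" using vt True n0 unfolding vertex_transitive_def by blast
    have "\<sigma> x = (\<sigma> \<circ> \<rho>) 0" using r by simp
    also have "\<dots> = (\<rho> \<circ> \<sigma>) 0" using comm[OF assms(1) r(1)] by simp
    also have "\<dots> = (\<rho> \<circ> \<tau>) 0" using assms(3) by simp
    also have "\<dots> = (\<tau> \<circ> \<rho>) 0" using comm[OF assms(2) r(1)] by simp
    finally show ?thesis using r by simp
  next
    case False
    then show ?thesis using aut_out[OF assms(1) False] aut_out[OF assms(2) False] by simp
  qed
qed

definition sig :: "nat \<Rightarrow> nat \<Rightarrow> nat" where
  "sig x = (SOME \<sigma>. \<sigma> \<in> Aut \<and> \<sigma> 0 = x)"

lemma sig: assumes "x < n" shows "sig x \<in> Aut" "sig x 0 = x"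
proof -
  have "\<exists>\<sigma>. \<sigma> \<in> Aut \<and> \<sigma> 0 = x" using vt assms n0 unfolding vertex_transitive_def by blast
  from someI_ex[OF this] show "sig x \<in> Aut" "sig x 0 = x" unfolding sig_def by auto
qed

lemma sig_unique: assumes "\<sigma> \<in> Aut" shows "sig (\<sigma> 0) = \<sigma>"
  using regular[OF sig(1) assms] sig(2) aut_lt[OF assms n0] by auto

lemma sig0: "sig 0 = id"
  using sig_unique[OF aut_id] by simp

definition iota :: "nat \<Rightarrow> nat" where
  "iota x = (if x < n then Hilbert_Choice.inv (sig x) 0 else x)"

lemma iota_lt: "x < n \<Longrightarrow> iota x < n"
  unfolding iota_def using aut_lt[OF aut_inv[OF sig(1)] n0] by auto

lemma iota_iota: "iota (iota x) = x"
proof (cases "x < n")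
  case True
  have a: "Hilbert_Choice.inv (sig x) \<in> Aut" using aut_inv[OF sig(1)[OF True]] .
  have "sig (iota x) = Hilbert_Choice.inv (sig x)" unfolding iota_def using True sig_unique[OF a] by simp
  then have "iota (iota x) = Hilbert_Choice.inv (Hilbert_Choice.inv (sig x)) 0" using iota_lt[OF True] unfolding iota_def[of "iota x"] by simp
  also have "\<dots> = sig x 0" using permutes_inv_inv[OF autD(1)[OF sig(1)[OF True]]] by simp
  finally show ?thesis using sig(2)[OF True] by simp
qed (simp add: iota_def)

lemma iota_aut: "iota \<in> Aut"
proof -
  have "iota permutes {..<n}"
  proof (rule inj_imp_permutes)
    show "inj_on iota {..<n}" by (metis inj_onI iota_iota)
    show "\<And>x. x \<in> {..<n} \<Longrightarrow> iota x \<in> {..<n}" using iota_lt by auto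
    show "\<And>x. x \<notin> {..<n} \<Longrightarrow> iota x = x" by (auto simp: iota_def)
  qed simp
  moreover have "E (iota x) (iota y) = E x y" if "x < n" "y < n" for x y
  proof -
    let ?s = "sig x" and ?t = "sig y"
    have s: "?s \<in> Aut" and t: "?t \<in> Aut" using sig that by auto
    have st: "?s \<circ> ?t \<in> Aut" using aut_comp s t .
    have "E (iota x) (iota y) = E ((?s \<circ> ?t) (iota x)) ((?s \<circ> ?t) (iota y))"
      using autD(2)[OF st iota_lt iota_lt] that by simp
    also have "(?s \<circ> ?t) (iota x) = (?t \<circ> ?s) (iota x)" using comm[OF s t] by simp
    also have "\<dots> = ?t 0" using that permutes_inverses(1)[OF autD(1)[OF s]] by (simp add: iota_def)
    also have "(?s \<circ> ?t) (iota y) = ?s 0" using that permutes_inverses(1)[OF autD(1)[OF t]] by (simp add: iota_def)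
    finally show ?thesis using sig(2) that sg unfolding simple_graph_def by auto
  qed
  ultimately show ?thesis unfolding graph_automorphisms_def by auto
qed

lemma invol: assumes "\<sigma> \<in> Aut" shows "\<sigma> (\<sigma> x) = x"
proof -
  let ?x = "\<sigma> 0"
  have x: "?x < n" using aut_lt[OF assms n0] .
  have i0: "iota 0 = 0" unfolding iota_def using sig0 n0 by simp
  have "iota ?x = \<sigma> (iota 0)" using comm[OF iota_aut assms] by (metis comp_apply)
  then have "Hilbert_Choice.inv \<sigma> 0 = \<sigma> 0" using i0 x sig_unique[OF assms] by (simp add: iota_def)
  then have "Hilbert_Choice.inv \<sigma> = \<sigma>" using regular[OF aut_inv[OF assms] assms] by simp
  then show ?thesis using permutes_inverses(1)[OF autD(1)[OF assms], of x] by simp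
qed

definition op :: "nat \<Rightarrow> nat \<Rightarrow> nat" where "op x y = sig x y"

lemma op_lt: "x < n \<Longrightarrow> y < n \<Longrightarrow> op x y < n"
  unfolding op_def using aut_lt sig by auto

lemma op0: "op 0 y = y" unfolding op_def sig0 by simp

lemma op_self: "x < n \<Longrightarrow> op x x = 0"
  unfolding op_def using invol[OF sig(1), of x 0] sig(2) by simp

lemma op_comm: "x < n \<Longrightarrow> y < n \<Longrightarrow> op x y = op y x"
  unfolding op_def using comm[OF sig(1) sig(1), of x y] sig(2)[of x] sig(2)[of y]
  by (metis comp_apply)

lemma sig_op: "x < n \<Longrightarrow> y < n \<Longrightarrow> sig (op x y) = sig x \<circ> sig y"
  using sig_unique[OF aut_comp[OF sig(1) sig(1)], of x y] sig(2)[of y] unfolding op_def by simp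

lemma op_assoc: "x < n \<Longrightarrow> y < n \<Longrightarrow> z < n \<Longrightarrow> op (op x y) z = op x (op y z)"
  using sig_op unfolding op_def by simp

lemma op_cancel: "x < n \<Longrightarrow> y < n \<Longrightarrow> op x (op x y) = y"
  using op_assoc op_self op0 by (metis)

lemma E_op: "x < n \<Longrightarrow> y < n \<Longrightarrow> E x y = E 0 (op x y)"
  using autD(2)[OF sig(1), of x x y] op_self unfolding op_def by auto

lemma sum_op: assumes "a < n" shows "(\<Sum>s<n. f (op a s)) = (\<Sum>s<n. (f s :: real))"
  by (rule sum.reindex_bij_witness[where i="op a" and j="op a"]) (auto simp: op_cancel op_lt assms)

end


context vtab
begin

definition subgrp :: "nat set \<Rightarrow> bool" where
  "subgrp K \<longleftrightarrow> K \<subseteq> {..<n} \<and> 0 \<in> K \<and> (\<forall>x\<in>K. \<forall>y\<in>K. op x y \<in> K)"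

definition chars :: "nat set \<Rightarrow> (nat \<Rightarrow> real) set" where
  "chars K = {\<chi>. (\<forall>x\<in>K. \<chi> x = 1 \<or> \<chi> x = -1) \<and> (\<forall>x\<in>K. \<forall>y\<in>K. \<chi> (op x y) = \<chi> x * \<chi> y)
      \<and> (\<forall>x. x \<notin> K \<longrightarrow> \<chi> x = 0)}"

lemma char0: assumes "\<chi> \<in> chars K" "0 \<in> K" shows "\<chi> 0 = 1"
proof -
  have "\<chi> 0 = \<chi> 0 * \<chi> 0" using assms op0[of 0] unfolding chars_def by force
  moreover have "\<chi> 0 = 1 \<or> \<chi> 0 = -1" using assms unfolding chars_def by auto
  ultimately show ?thesis by auto
qed

lemma extend:
  assumes K: "subgrp K" and a: "a < n" "a \<notin> K"
    and C: "finite C" "card C = card K" "C \<subseteq> chars K"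
  shows "\<exists>K' C'. subgrp K' \<and> finite C' \<and> card C' = card K' \<and> C' \<subseteq> chars K' \<and> card K' = 2 * card K"
proof -
  have Kn: "K \<subseteq> {..<n}" using K unfolding subgrp_def by auto
  have finK: "finite K" using Kn finite_subset by blast
  define aK where "aK = op a ` K"
  define K' where "K' = K \<union> aK"
  have inK: "x \<in> K \<Longrightarrow> x < n" for x using Kn by auto
  have disj: "K \<inter> aK = {}"
  proof -
    have False if "op a k \<in> K" "k \<in> K" for k
    proof -
      have "op (op a k) k \<in> K" using K that unfolding subgrp_def by auto
      moreover have "op (op a k) k = a"
        by (metis \<open>k \<in> K\<close> a(1) inK op_comm op_cancel op_lt)
      ultimately show False using a by auto
    qed
    then show ?thesis unfolding aK_def by auto
  qed
  have injA: "inj_on (op a) K" by (metis inj_onI op_cancel a(1) inK)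
  have cardaK: "card aK = card K" unfolding aK_def using card_image[OF injA] .
  have cardK': "card K' = 2 * card K" unfolding K'_def
    using card_Un_disjoint[OF finK _ disj] cardaK finK aK_def by auto
  have subK': "subgrp K'" unfolding subgrp_def K'_def aK_def
  proof (intro conjI ballI)
    show "K \<union> op a ` K \<subseteq> {..<n}" using Kn op_lt a by auto
    show "0 \<in> K \<union> op a ` K" using K unfolding subgrp_def by auto
    fix x y assume x: "x \<in> K \<union> op a ` K" and y: "y \<in> K \<union> op a ` K"
    have cl: "u \<in> K \<Longrightarrow> v \<in> K \<Longrightarrow> op u v \<in> K" for u v using K unfolding subgrp_def by auto
    show "op x y \<in> K \<union> op a ` K"
      using x y
    proof (elim UnE imageE)
      fix u assume "x \<in> K" "y \<in> K" then show ?thesis using cl by auto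
    next
      fix u assume "x \<in> K" "y = op a u" "u \<in> K"
      then have "op x y = op a (op x u)" by (metis a(1) inK op_assoc op_comm)
      then show ?thesis using cl \<open>x \<in> K\<close> \<open>u \<in> K\<close> by auto
    next
      fix u assume "y \<in> K" "x = op a u" "u \<in> K"
      then have "op x y = op a (op u y)" by (metis a(1) inK op_assoc)
      then show ?thesis using cl \<open>y \<in> K\<close> \<open>u \<in> K\<close> by auto
    next
      fix u v assume "x = op a u" "u \<in> K" "y = op a v" "v \<in> K"
      then have "op x y = op u v"
        by (metis a(1) inK op_assoc op_comm op_cancel op_lt)
      then show ?thesis using cl \<open>u \<in> K\<close> \<open>v \<in> K\<close> by auto
    qed
  qed
  define ext :: "(nat \<Rightarrow> real) \<Rightarrow> real \<Rightarrow> nat \<Rightarrow> real" where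
    "ext \<chi> e x = (if x \<in> K then \<chi> x else if x \<in> aK then e * \<chi> (op a x) else 0)" for \<chi> e x
  define C' where "C' = (\<lambda>(\<chi>, e). ext \<chi> e) ` (C \<times> {1, -1})"
  have opaK: "u \<in> K \<Longrightarrow> op a u \<in> aK" for u unfolding aK_def by auto
  have opaK2: "u \<in> K \<Longrightarrow> op a u \<notin> K" for u using disj opaK by blast
  have ext_ch: "ext \<chi> e \<in> chars K'" if ch: "\<chi> \<in> chars K" and e: "e = 1 \<or> e = -1" for \<chi> e
  proof -
    have pm: "x \<in> K \<Longrightarrow> \<chi> x = 1 \<or> \<chi> x = -1" for x using ch unfolding chars_def by auto
    have hom: "x \<in> K \<Longrightarrow> y \<in> K \<Longrightarrow> \<chi> (op x y) = \<chi> x * \<chi> y" for x y using ch unfolding chars_def by auto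
    have cl: "u \<in> K \<Longrightarrow> v \<in> K \<Longrightarrow> op u v \<in> K" for u v using K unfolding subgrp_def by auto
    have ext_aK: "u \<in> K \<Longrightarrow> ext \<chi> e (op a u) = e * \<chi> u" for u
      unfolding ext_def using opaK opaK2 op_cancel a(1) inK by auto
    have ext_K: "u \<in> K \<Longrightarrow> ext \<chi> e u = \<chi> u" for u unfolding ext_def by auto
    show ?thesis unfolding chars_def
    proof (intro CollectI conjI ballI allI impI)
      fix x assume "x \<in> K'"
      then show "ext \<chi> e x = 1 \<or> ext \<chi> e x = - 1" unfolding K'_def aK_def
        using ext_aK ext_K e by (auto; metis pm add.inverse_inverse mult_minus_left mult_1)
    next
      fix x assume "x \<notin> K'" then show "ext \<chi> e x = 0" unfolding K'_def ext_def by auto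
    next
      fix x y assume x: "x \<in> K'" and y: "y \<in> K'"
      show "ext \<chi> e (op x y) = ext \<chi> e x * ext \<chi> e y"
        using x y unfolding K'_def aK_def
      proof (elim UnE imageE)
        fix u assume "x \<in> K" "y \<in> K" then show ?thesis using cl ext_K hom by auto
      next
        fix u assume "x \<in> K" "y = op a u" "u \<in> K"
        then have "op x y = op a (op x u)" by (metis a(1) inK op_assoc op_comm)
        then show ?thesis using cl \<open>x \<in> K\<close> \<open>u \<in> K\<close> \<open>y = op a u\<close> ext_aK ext_K hom by auto
      next
        fix u assume "y \<in> K" "x = op a u" "u \<in> K"
        then have "op x y = op a (op u y)" by (metis a(1) inK op_assoc)
        then show ?thesis using cl \<open>y \<in> K\<close> \<open>u \<in> K\<close> \<open>x = op a u\<close> ext_aK ext_K hom by auto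
      next
        fix u v assume "x = op a u" "u \<in> K" "y = op a v" "v \<in> K"
        moreover have "op x y = op u v" using calculation
          by (metis a(1) inK op_assoc op_comm op_cancel op_lt)
        moreover have "e * e = 1" using e by auto
        ultimately show ?thesis using cl ext_aK ext_K hom
          by (metis (no_types, lifting) mult.assoc mult.left_commute mult_1)
      qed
    qed
  qed
  have inj: "inj_on (\<lambda>(\<chi>, e). ext \<chi> e) (C \<times> {1, -1})"
  proof (rule inj_onI, clarify)
    fix \<chi> e \<psi> f assume ch: "\<chi> \<in> C" "\<psi> \<in> C" and e: "e \<in> {1, -1::real}" "f \<in> {1,-1::real}"
      and eq: "ext \<chi> e = ext \<psi> f"
    have "\<chi> = \<psi>"
    proof
      fix x
      show "\<chi> x = \<psi> x"
      proof (cases "x \<in> K")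
        case True then show ?thesis using fun_cong[OF eq, of x] unfolding ext_def by auto
      next
        case False
        have "\<chi> \<in> chars K" "\<psi> \<in> chars K" using ch C(3) by auto
        then show ?thesis using False unfolding chars_def by auto
      qed
    qed
    moreover have "0 \<in> K" using K unfolding subgrp_def by auto
    moreover have "ext \<chi> e a = e * \<chi> 0" "ext \<psi> f a = f * \<psi> 0"
      unfolding ext_def using opaK[of 0] a op_self \<open>0 \<in> K\<close> op_comm[OF a(1) n0] op0[of a] by auto
    moreover have "\<chi> 0 = 1" "\<psi> 0 = 1" using char0 ch C(3) \<open>0 \<in> K\<close> by auto
    ultimately show "\<chi> = \<psi> \<and> e = f" using fun_cong[OF eq, of a] by auto
  qed
  have "card C' = 2 * card C" unfolding C'_def using card_image[OF inj] C(1)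
    by (simp add: card_cartesian_product)
  moreover have "C' \<subseteq> chars K'" unfolding C'_def using ext_ch C(3) by auto
  moreover have "finite C'" unfolding C'_def using C(1) by auto
  ultimately show ?thesis using subK' cardK' C(2) by metis
qed

lemma exists_chars:
  "\<exists>K C. subgrp K \<and> finite C \<and> card C = card K \<and> C \<subseteq> chars K \<and> (m \<le> card K \<or> K = {..<n})"
proof (induction m)
  case 0
  define \<chi> :: "nat \<Rightarrow> real" where "\<chi> x = (if x = 0 then 1 else 0)" for x
  have "subgrp {0}" unfolding subgrp_def using n0 op0 by auto
  moreover have "\<chi> \<in> chars {0}" unfolding chars_def \<chi>_def using op0 by auto
  ultimately show ?case by (intro exI[of _ "{0}"] exI[of _ "{\<chi>}"]) auto
next
  case (Suc m)
  then obtain K C where KC: "subgrp K" "finite C" "card C = card K" "C \<subseteq> chars K" "m \<le> card K \<or> K = {..<n}"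
    by blast
  show ?case
  proof (cases "K = {..<n} \<or> Suc m \<le> card K")
    case True then show ?thesis using KC by blast
  next
    case False
    then obtain a where a: "a < n" "a \<notin> K" using KC(1) unfolding subgrp_def by auto
    obtain K' C' where K'C': "subgrp K'" "finite C'" "card C' = card K'" "C' \<subseteq> chars K'" "card K' = 2 * card K"
      using extend[OF KC(1) a KC(2-4)] by blast
    have "card K \<ge> 1"
    proof -
      have "finite K" using KC(1) finite_subset unfolding subgrp_def by blast
      then show ?thesis using KC(1) unfolding subgrp_def by (metis card_0_eq empty_iff less_one not_less)
    qed
    then have "Suc m \<le> card K'" using K'C'(5) False KC(5) by auto
    then show ?thesis using K'C' by blast
  qed
qed

lemma full_chars: "\<exists>C. finite C \<and> card C = n \<and> C \<subseteq> chars {..<n}"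
proof -
  obtain K C where KC: "subgrp K" "finite C" "card C = card K" "C \<subseteq> chars K" "n \<le> card K \<or> K = {..<n}"
    using exists_chars[of n] by blast
  have "K = {..<n}" using KC(1,5) card_subset_eq[of "{..<n}" K] unfolding subgrp_def
    by (metis card_lessThan card_mono finite_lessThan le_antisym)
  then show ?thesis using KC by auto
qed

end


context vtab
begin

definition mu :: "(nat \<Rightarrow> real) \<Rightarrow> real" where
  "mu \<chi> = (\<Sum>s<n. if E 0 s then \<chi> s else 0)"

definition triv :: "nat \<Rightarrow> real" where "triv x = (if x < n then 1 else 0)"

lemma chD: assumes "\<chi> \<in> chars {..<n}"
  shows "x < n \<Longrightarrow> \<chi> x = 1 \<or> \<chi> x = -1" "x < n \<Longrightarrow> y < n \<Longrightarrow> \<chi> (op x y) = \<chi> x * \<chi> y"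
    "\<not> x < n \<Longrightarrow> \<chi> x = 0"
  using assms unfolding chars_def by auto

lemma sum_anti: assumes "a < n" "\<And>x. x < n \<Longrightarrow> f (op a x) = - f x"
  shows "(\<Sum>x<n. f x) = (0::real)"
proof -
  have "(\<Sum>x<n. f x) = (\<Sum>x<n. f (op a x))" using sum_op[OF assms(1), of f] by simp
  also have "\<dots> = - (\<Sum>x<n. f x)" using assms(2) by (simp add: sum_negf)
  finally show ?thesis by simp
qed

lemma ch_eq: assumes "\<chi> \<in> chars {..<n}" "\<psi> \<in> chars {..<n}" "\<forall>x<n. \<chi> x = \<psi> x" shows "\<chi> = \<psi>"
proof
  fix x show "\<chi> x = \<psi> x" using assms chD(3)[OF assms(1)] chD(3)[OF assms(2)] by (cases "x < n") auto
qed

lemma sum_nontriv: assumes "\<chi> \<in> chars {..<n}" "\<chi> \<noteq> triv" shows "(\<Sum>x<n. \<chi> x) = 0"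
proof -
  have tc: "triv \<in> chars {..<n}" unfolding chars_def triv_def using op_lt by auto
  obtain a where a: "a < n" "\<chi> a \<noteq> triv a" using ch_eq[OF assms(1) tc] assms(2) by blast
  then have "\<chi> a = -1" using chD(1)[OF assms(1)] unfolding triv_def by auto
  then show ?thesis using sum_anti[OF a(1)] chD(2)[OF assms(1) a(1)] by simp
qed

lemma orth: assumes "\<chi> \<in> chars {..<n}" "\<psi> \<in> chars {..<n}" "\<chi> \<noteq> \<psi>"
  shows "(\<Sum>x<n. \<chi> x * \<psi> x) = 0"
proof -
  obtain a where a: "a < n" "\<chi> a \<noteq> \<psi> a" using ch_eq[OF assms(1,2)] assms(3) by blast
  then have "\<chi> a * \<psi> a = -1" using chD(1)[OF assms(1)] chD(1)[OF assms(2)] by fastforce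
  then show ?thesis
    by (intro sum_anti[OF a(1)]) (simp add: chD(2)[OF assms(1) a(1)] chD(2)[OF assms(2) a(1)] algebra_simps)
qed

lemma sq_sum: assumes "\<chi> \<in> chars {..<n}" shows "(\<Sum>x<n. \<chi> x * \<chi> x) = n"
proof -
  have "(\<Sum>x<n. \<chi> x * \<chi> x) = (\<Sum>x<n. 1)" using chD(1)[OF assms] by (intro sum.cong) (auto, fastforce)
  then show ?thesis by simp
qed

lemma pair: assumes "\<chi> \<in> chars {..<n}" "\<psi> \<in> chars {..<n}" "\<chi> \<noteq> \<psi>" "\<chi> \<noteq> triv" "\<psi> \<noteq> triv"
  shows "mu \<chi> + mu \<psi> \<le> n / 2"
proof -
  have "mu \<chi> + mu \<psi> = (\<Sum>s<n. if E 0 s then \<chi> s + \<psi> s else 0)"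
    unfolding mu_def by (simp add: sum.distrib[symmetric]) (intro sum.cong, auto)
  also have "\<dots> \<le> (\<Sum>s<n. (1 + \<chi> s) * (1 + \<psi> s) / 2)"
  proof (rule sum_mono)
    fix s assume "s \<in> {..<n}"
    then have "\<chi> s = 1 \<or> \<chi> s = -1" "\<psi> s = 1 \<or> \<psi> s = -1" using chD(1) assms by auto
    then show "(if E 0 s then \<chi> s + \<psi> s else 0) \<le> (1 + \<chi> s) * (1 + \<psi> s) / 2" by auto
  qed
  also have "\<dots> = ((\<Sum>s<n. 1) + (\<Sum>s<n. \<chi> s) + (\<Sum>s<n. \<psi> s) + (\<Sum>s<n. \<chi> s * \<psi> s)) / 2"
    by (simp add: sum_divide_distrib[symmetric] sum.distrib algebra_simps)
  also have "\<dots> = n / 2" using sum_nontriv[OF assms(1,4)] sum_nontriv[OF assms(2,5)] orth[OF assms(1-3)] by simp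
  finally show ?thesis .
qed

end


lemma mat_mult_entry:
  assumes "i < n" "j < n"
  shows "(mat n n f * mat n n g) $$ (i, j) = (\<Sum>k<n. f (i, k) * g (k, j))"
  using assms by (simp add: scalar_prod_def lessThan_atLeast0)

context vtab
begin

lemma char_poly_eq:
  assumes bij: "bij_betw ch {0..<n} C" and C: "C \<subseteq> chars {..<n}"
  shows "char_poly (adjacency_matrix n E) = (\<Prod>a \<leftarrow> map (\<lambda>j. mu (ch j)) [0..<n]. [:- a, 1:])"
proof -
  have chC: "j < n \<Longrightarrow> ch j \<in> chars {..<n}" for j using bij C unfolding bij_betw_def by auto
  have inj: "i < n \<Longrightarrow> j < n \<Longrightarrow> ch i = ch j \<Longrightarrow> i = j" for i j
    using bij unfolding bij_betw_def inj_on_def by auto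
  define A where "A = adjacency_matrix n E"
  define H where "H = mat n n (\<lambda>(x, j). ch j x)"
  define Q where "Q = mat n n (\<lambda>(j, x). ch j x / n)"
  define D where "D = mat n n (\<lambda>(i, j). if i = j then mu (ch i) else 0)"
  have cA: "A \<in> carrier_mat n n" and cH: "H \<in> carrier_mat n n" and cQ: "Q \<in> carrier_mat n n"
    and cD: "D \<in> carrier_mat n n"
    unfolding A_def adjacency_matrix_def H_def Q_def D_def by auto
  have QH: "Q * H = 1\<^sub>m n"
  proof (rule eq_matI)
    fix i j assume ij: "i < dim_row (1\<^sub>m n)" "j < dim_col (1\<^sub>m n)"
    then have ij': "i < n" "j < n" by auto
    have "(Q * H) $$ (i, j) = (\<Sum>x<n. ch i x / n * ch j x)"
      unfolding Q_def H_def mat_mult_entry[OF ij'] by simp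
    also have "\<dots> = (\<Sum>x<n. ch i x * ch j x) / n" by (simp add: sum_divide_distrib)
    also have "\<dots> = (if i = j then 1 else 0)"
      using sq_sum[OF chC[OF ij'(1)]] orth[OF chC[OF ij'(1)] chC[OF ij'(2)]] inj[OF ij'] n0 by auto
    finally show "(Q * H) $$ (i, j) = 1\<^sub>m n $$ (i, j)" using ij' by simp
  qed (auto simp: Q_def H_def)
  have HQ: "H * Q = 1\<^sub>m n" using mat_mult_left_right_inverse[OF cQ cH QH] .
  have AH: "A * H = H * D"
  proof (rule eq_matI)
    fix x j assume "x < dim_row (H * D)" "j < dim_col (H * D)"
    then have xj: "x < n" "j < n" unfolding H_def D_def by auto
    let ?c = "ch j"
    have c: "?c \<in> chars {..<n}" using chC[OF xj(2)] .
    have "(A * H) $$ (x, j) = (\<Sum>y<n. (if E x y then 1 else 0) * ?c y)"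
      unfolding A_def adjacency_matrix_def H_def mat_mult_entry[OF xj] by simp
    also have "\<dots> = (\<Sum>s<n. (if E x (op x s) then 1 else 0) * ?c (op x s))"
      using sum_op[OF xj(1), of "\<lambda>y. (if E x y then 1 else 0) * ?c y"] by simp
    also have "\<dots> = (\<Sum>s<n. ?c x * (if E 0 s then ?c s else 0))"
      by (intro sum.cong refl) (auto simp: E_op[OF xj(1) op_lt[OF xj(1)]] op_cancel xj chD(2)[OF c])
    also have "\<dots> = ?c x * mu ?c" unfolding mu_def by (simp add: sum_distrib_left)
    finally have l: "(A * H) $$ (x, j) = ?c x * mu ?c" .
    have "(H * D) $$ (x, j) = (\<Sum>k<n. ch k x * (if k = j then mu (ch k) else 0))"
      unfolding H_def D_def mat_mult_entry[OF xj] by simp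
    also have "\<dots> = ?c x * mu ?c" using xj(2)
      by (simp add: if_distrib[of "\<lambda>t. ch _ x * t"] sum.delta cong: if_cong)
    finally show "(A * H) $$ (x, j) = (H * D) $$ (x, j)" using l by simp
  qed (auto simp: A_def adjacency_matrix_def H_def D_def)
  have "A = A * (H * Q)" using HQ cA by simp
  also have "\<dots> = (A * H) * Q" using cA cH cQ by simp
  also have "\<dots> = H * D * Q" using AH by simp
  finally have "A = H * D * Q" .
  then have "similar_mat A D" using similar_matI[of A D H Q n] cA cD cH cQ HQ QH by auto
  then have "char_poly A = char_poly D" by (rule char_poly_similar)
  also have "\<dots> = (\<Prod>a \<leftarrow> diag_mat D. [:- a, 1:])"
    by (rule char_poly_upper_triangular[OF cD]) (auto simp: upper_triangular_def D_def)
  also have "diag_mat D = map (\<lambda>j. mu (ch j)) [0..<n]"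
    unfolding diag_mat_def D_def by auto
  finally show ?thesis unfolding A_def .
qed

end


lemma sum_list_singletons: "(\<Sum>a\<leftarrow>xs. {#a#}) = mset xs"
  by (induction xs) auto

context vtab
begin

lemma main: "adj_lambda 3 n E \<le> n / 3"
proof -
  obtain C where C: "finite C" "card C = n" "C \<subseteq> chars {..<n}" using full_chars by blast
  obtain ch where bij: "bij_betw ch {0..<n} C" using ex_bij_betw_nat_finite[OF C(1)] C(2) by blast
  have chC: "j < n \<Longrightarrow> ch j \<in> chars {..<n}" for j using bij C unfolding bij_betw_def by auto
  have inj: "i < n \<Longrightarrow> j < n \<Longrightarrow> ch i = ch j \<Longrightarrow> i = j" for i j
    using bij unfolding bij_betw_def inj_on_def by auto
  define ms where "ms = map (\<lambda>j. mu (ch j)) [0..<n]"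
  have "proots (char_poly (adjacency_matrix n E)) = proots (\<Prod>a \<leftarrow> ms. [:- a, 1:])"
    using char_poly_eq[OF bij C(3)] unfolding ms_def by simp
  also have "\<dots> = mset ms"
  proof -
    have "0 \<notin> (\<lambda>a. [:- a, 1:]) ` set ms" by (auto simp: pCons_eq_0_iff)
    then show ?thesis using proots_prod_list[of "map (\<lambda>a. [:- a, 1:]) ms"] by (simp add: comp_def)
  qed
  finally have pr: "proots (char_poly (adjacency_matrix n E)) = mset ms" .
  define L where "L = rev (sort ms)"
  have Ldef: "adj_lambda 3 n E = L ! 2"
    unfolding adj_lambda_def adj_eigenvalues_desc_def pr L_def by simp
  have lenL: "length L = n" unfolding L_def ms_def by simp
  show ?thesis
  proof (rule ccontr)
    assume "\<not> ?thesis"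
    then have tgt: "L ! 2 > n / 3" using Ldef by simp
    let ?t = "L ! 2"
    have ge: "i \<le> 2 \<Longrightarrow> ?t \<le> L ! i" for i
    proof -
      assume i: "i \<le> 2"
      have s: "sorted (sort ms)" by simp
      have ls: "length (sort ms) = n" unfolding ms_def by simp
      have "L ! i = sort ms ! (n - Suc i)" "L ! 2 = sort ms ! (n - 3)"
        unfolding L_def using i n3 ls by (simp_all add: rev_nth)
      moreover have "sort ms ! (n - 3) \<le> sort ms ! (n - Suc i)"
        by (rule sorted_nth_mono[OF s]) (use i n3 ls in auto)
      ultimately show ?thesis by simp
    qed
    have sub: "{0, 1, 2} \<subseteq> {i. i < length L \<and> ?t \<le> L ! i}"
      using ge[of 0] ge[of 1] ge[of 2] lenL n3 by auto
    have fin: "finite {i. i < length L \<and> ?t \<le> L ! i}" by simp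
    have "card {0, 1, 2::nat} = 3" by simp
    then have "3 \<le> card {i. i < length L \<and> ?t \<le> L ! i}"
      using card_mono[OF fin sub] by simp
    also have "card {i. i < length L \<and> ?t \<le> L ! i} = length (filter (\<lambda>v. ?t \<le> v) L)"
      by (rule length_filter_conv_card[symmetric])
    also have "\<dots> = length (filter (\<lambda>v. ?t \<le> v) ms)"
      unfolding L_def by (simp only: rev_filter[symmetric] length_rev filter_sort length_sort)
    also have "\<dots> = card {j. j < n \<and> ?t \<le> mu (ch j)}"
      unfolding length_filter_conv_card ms_def by (intro arg_cong[where f=card]) auto
    finally have "3 \<le> card {j. j < n \<and> ?t \<le> mu (ch j)}" .
    then obtain T where T: "T \<subseteq> {j. j < n \<and> ?t \<le> mu (ch j)}" "card T = 3"
      by (meson obtain_subset_with_card_n)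
    then obtain a b c where abc: "T = {a, b, c}" "a \<noteq> b" "b \<noteq> c" "a \<noteq> c"
      unfolding card_3_iff by blast
    have mem: "a < n" "b < n" "c < n" "?t \<le> mu (ch a)" "?t \<le> mu (ch b)" "?t \<le> mu (ch c)"
      using T(1) abc(1) by auto
    have bad: "mu (ch i) + mu (ch j) \<le> n / 2" if "i < n" "j < n" "i \<noteq> j" "ch i \<noteq> triv" "ch j \<noteq> triv" for i j
    proof -
      have "ch i \<noteq> ch j" using inj[OF that(1,2)] that(3) by blast
      then show ?thesis using pair[OF chC[OF that(1)] chC[OF that(2)] _ that(4,5)] by blast
    qed
    have "\<exists>i j. i < n \<and> j < n \<and> i \<noteq> j \<and> ch i \<noteq> triv \<and> ch j \<noteq> triv \<and> ?t \<le> mu (ch i) \<and> ?t \<le> mu (ch j)"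
    proof (cases "ch a = triv")
      case True
      have "ch b \<noteq> triv" using inj[OF mem(1) mem(2)] abc(2) True by metis
      moreover have "ch c \<noteq> triv" using inj[OF mem(1) mem(3)] abc(4) True by metis
      ultimately show ?thesis using mem abc(3) by (intro exI[of _ b] exI[of _ c]) simp
    next
      case False
      show ?thesis
      proof (cases "ch b = triv")
        case True
        have "ch c \<noteq> triv" using inj[OF mem(2) mem(3)] abc(3) True by metis
        then show ?thesis using False mem abc(4) by (intro exI[of _ a] exI[of _ c]) simp
      next
        case False2: False
        then show ?thesis using False mem abc(2) by (intro exI[of _ a] exI[of _ b]) simp
      qed
    qed
    then obtain i j where ij: "i < n" "j < n" "i \<noteq> j" "ch i \<noteq> triv" "ch j \<noteq> triv"
      "?t \<le> mu (ch i)" "?t \<le> mu (ch j)" by blast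
    have "mu (ch i) + mu (ch j) \<le> n / 2" using bad ij by blast
    moreover have "mu (ch i) + mu (ch j) > 2 * n / 3" using ij(6,7) tgt by linarith
    ultimately show False using n0 by simp
  qed
qed

end

theorem corollary3p12:
  fixes n :: nat and E :: "nat \<Rightarrow> nat \<Rightarrow> bool"
  assumes "simple_graph n E"
    and "n \<ge> 3"
    and "vertex_transitive n E"
    and "abelian_automorphism_group n E"
  shows "adj_lambda 3 n E / real n \<le> 1 / 3"
proof -
  interpret vtab n E using assms by unfold_locales
  have "adj_lambda 3 n E \<le> n / 3" by (rule main)
  then show ?thesis using assms(2) by (simp add: divide_le_eq field_simps)
qed

end
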